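(* Let $(\mathbb{X},\oplus,\otimes,\mathbb{0},\mathbb{1})$ be a linearly ordered, algebraically complete idempotent semifield, let $\bm{A}_1,\ldots,\bm{A}_m\in\mathbb{X}^{n\times n}$ be reciprocal matrices (i.e. $\bm{A}_i^{-}=\bm{A}_i$) and $w_1,\ldots,w_m\in\mathbb{X}$ scalars such that $\bm{B}=w_1\bm{A}_1\oplus\cdots\oplus w_m\bm{A}_m$ has no zero entries. Let $\mu$ be the spectral radius of $\bm{B}$ and $\bm{B}_{\mu}=\mu^{-1}\bm{B}$. Consider the problem of minimizing $\max_{1\le i\le m} w_i\, d(\bm{A}_i,\bm{x}\bm{x}^{-})$ (i.e. $\bigoplus_{i=1}^m w_i d(\bm{A}_i,\bm{x}\bm{x}^{-})$) over all regular vectors $\bm{x}\in\mathbb{X}^n$. Then the minimum value equals $\mu$, and the set of all solutions is $\{\bm{x}=\bm{B}_{\mu}^{\ast}\bm{u}:\bm{u}\in\mathbb{X}^n,\ \bm{u}\ne\bm{0}\}$.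
   Context: An idempotent semifield is a set $\mathbb{X}$ with associative, commutative operations $\oplus$ (addition) and $\otimes$ (multiplication, usually omitted in writing) with neutral elements $\mathbb{0}$ and $\mathbb{1}$, multiplication distributing over addition, idempotent addition ($x\oplus x=x$), and every nonzero $x$ having an inverse $x^{-1}$ with $xx^{-1}=\mathbb{1}$. It is assumed linearly ordered by the order $x\le y \iff x\oplus y=y$, and algebraically complete: $x^p=a$ is solvable for every $a$ and integer $p>0$, so rational powers are defined. Matrix and vector operations (including scalar multiplication) use the usual formulas with $\oplus,\otimes$ in place of $+,\times$; $\bm{0}$ is the zero vector; a vector is regular if it has no zero entries. For a nonzero column vector $\bm{x}=(x_i)$, $\bm{x}^{-}$ is the row vector with entries $x_i^{-1}$ if $x_i\ne\mathbb{0}$ and $\mathbb{0}$ otherwise. For a nonzero matrix $\bm{A}=(a_{ij})$, $\bm{A}^{-}=(a^{-}_{ij})$ with $a^{-}_{ij}=a_{ji}^{-1}$ if $a_{ji}\neq\mathbb{0}$ and $\mathbb{0}$ otherwise. The trace is $\mathrm{tr}\,\bm{A}=a_{11}\oplus\cdots\oplus a_{nn}$. The distance between square matrices is $d(\bm{A},\bm{B})=\mathrm{tr}(\bm{B}^{-}\bm{A})\oplus\mathrm{tr}(\bm{A}^{-}\bm{B})$. $\bm{I}$ is the identity matrix, $\bm{A}^0=\bm{I}$, $\bm{A}^p=\bm{A}^{p-1}\bm{A}$. The spectral radius of $\bm{A}$ of order $n$ is $\lambda=\bigoplus_{k=1}^{n}\bigoplus_{1\le i_1,\ldots,i_k\le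 n}(a_{i_1i_2}a_{i_2i_3}\cdots a_{i_ki_1})^{1/k}$. For a square matrix $\bm{M}$ of order $n$, $\bm{M}^{\ast}=\bm{I}\oplus\bm{M}\oplus\cdots\oplus\bm{M}^{n-1}$. *)

theory Defs
  imports Main
begin

text \<open>Addition (+) plays the role of the idempotent addition, (*) of the multiplication,
  0 and 1 are the neutral elements; the order is the canonical one (x \<le> y iff x + y = y).\<close>

class lin_idem_semifield = comm_semiring_1 + inverse + linorder +
  assumes add_idem: "x + x = x"
  assumes le_iff_add: "x \<le> y \<longleftrightarrow> x + y = y"
  assumes right_inverse_nz: "x \<noteq> 0 \<Longrightarrow> x * inverse x = 1"
  assumes alg_complete: "0 < p \<Longrightarrow> \<exists>x. x ^ p = a"

context lin_idem_semifield
begin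

text \<open>k-th root (unique solution of x^k = a; exists by algebraic completeness).\<close>
definition sroot :: "nat \<Rightarrow> 'a \<Rightarrow> 'a" where
  "sroot k a = (THE x. x ^ k = a)"

end

definition mmult :: "('n::finite \<Rightarrow> 'n \<Rightarrow> 'a::lin_idem_semifield) \<Rightarrow> ('n \<Rightarrow> 'n \<Rightarrow> 'a) \<Rightarrow> ('n \<Rightarrow> 'n \<Rightarrow> 'a)" where
  "mmult A B = (\<lambda>i j. \<Sum>k\<in>UNIV. A i k * B k j)"

definition mvmult :: "('n::finite \<Rightarrow> 'n \<Rightarrow> 'a::lin_idem_semifield) \<Rightarrow> ('n \<Rightarrow> 'a) \<Rightarrow> ('n \<Rightarrow> 'a)" where
  "mvmult A x = (\<lambda>i. \<Sum>j\<in>UNIV. A i j * x j)"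

definition smult :: "'a::lin_idem_semifield \<Rightarrow> ('n \<Rightarrow> 'n \<Rightarrow> 'a) \<Rightarrow> ('n \<Rightarrow> 'n \<Rightarrow> 'a)" where
  "smult c A = (\<lambda>i j. c * A i j)"

definition mident :: "'n \<Rightarrow> 'n \<Rightarrow> 'a::lin_idem_semifield" where
  "mident = (\<lambda>i j. if i = j then 1 else 0)"

fun mpow :: "('n::finite \<Rightarrow> 'n \<Rightarrow> 'a::lin_idem_semifield) \<Rightarrow> nat \<Rightarrow> ('n \<Rightarrow> 'n \<Rightarrow> 'a)" where
  "mpow A 0 = mident"
| "mpow A (Suc p) = mmult (mpow A p) A"

definition mstar :: "('n::finite \<Rightarrow> 'n \<Rightarrow> 'a::lin_idem_semifield) \<Rightarrow> ('n \<Rightarrow> 'n \<Rightarrow> 'a)" where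
  "mstar M = (\<lambda>i j. \<Sum>k<card (UNIV :: 'n set). mpow M k i j)"

definition mpinv :: "('n \<Rightarrow> 'n \<Rightarrow> 'a::lin_idem_semifield) \<Rightarrow> ('n \<Rightarrow> 'n \<Rightarrow> 'a)" where
  "mpinv A = (\<lambda>i j. if A j i \<noteq> 0 then inverse (A j i) else 0)"

definition vpinv :: "('n \<Rightarrow> 'a::lin_idem_semifield) \<Rightarrow> ('n \<Rightarrow> 'a)" where
  "vpinv x = (\<lambda>i. if x i \<noteq> 0 then inverse (x i) else 0)"

definition outer_pinv :: "('n \<Rightarrow> 'a::lin_idem_semifield) \<Rightarrow> ('n \<Rightarrow> 'n \<Rightarrow> 'a)" where
  "outer_pinv x = (\<lambda>i j. x i * vpinv x j)"

definition mtrace :: "('n::finite \<Rightarrow> 'n \<Rightarrow> 'a::lin_idem_semifield) \<Rightarrow> 'a" where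
  "mtrace A = (\<Sum>i\<in>UNIV. A i i)"

definition mdist :: "('n::finite \<Rightarrow> 'n \<Rightarrow> 'a::lin_idem_semifield) \<Rightarrow> ('n \<Rightarrow> 'n \<Rightarrow> 'a) \<Rightarrow> 'a" where
  "mdist A B = mtrace (mmult (mpinv B) A) + mtrace (mmult (mpinv A) B)"

definition regular :: "('n \<Rightarrow> 'a::lin_idem_semifield) \<Rightarrow> bool" where
  "regular x \<longleftrightarrow> (\<forall>i. x i \<noteq> 0)"

definition spec_rad :: "('n::finite \<Rightarrow> 'n \<Rightarrow> 'a::lin_idem_semifield) \<Rightarrow> 'a" where
  "spec_rad A = (\<Sum>k\<in>{1..card (UNIV :: 'n set)}. \<Sum>is\<in>{is :: 'n list. length is = k}.
      sroot k (\<Prod>j<k. A (is ! j) (is ! ((j + 1) mod k))))"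

end

theory Submission imports Defs begin

context lin_idem_semifield
begin

lemma add_max: "x + y = max x y"
  by (metis add_commute le_iff_add max.absorb1 max.absorb2 nle_le)

lemma zero_le': "0 \<le> x"
  by (simp add: le_iff_add)

subclass ordered_comm_semiring
proof
  fix a b c :: 'a
  show "a \<le> b \<Longrightarrow> c + a \<le> c + b" by (auto simp: add_max intro: max.coboundedI2)
  assume "a \<le> b" "0 \<le> c"
  then have "a + b = b" by (simp add: le_iff_add)
  then have "c*a + c*b = c*b" by (metis distrib_left)
  then show "c * a \<le> c * b" by (simp add: le_iff_add)
qed

subclass ordered_semiring_1
proof
  show "0 < 1" using zero_le'[of 1] zero_neq_one by (simp add: order.order_iff_strict)
qed

lemma left_inverse_nz: "x \<noteq> 0 \<Longrightarrow> inverse x * x = 1"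
  using right_inverse_nz by (simp add: mult.commute)

lemma inverse_unique: "a * b = 1 \<Longrightarrow> b = inverse a"
proof -
  assume h: "a * b = 1"
  then have "a \<noteq> 0" by auto
  have "b = b * (a * inverse a)" using right_inverse_nz[OF \<open>a\<noteq>0\<close>] by simp
  also have "\<dots> = inverse a" using h by (metis mult.assoc mult.commute mult_1_right)
  finally show ?thesis .
qed

lemma inverse_nz: "x \<noteq> 0 \<Longrightarrow> inverse x \<noteq> 0"
  using right_inverse_nz[of x] by (metis mult_zero_right zero_neq_one)

lemma no_zero_div: "x \<noteq> 0 \<Longrightarrow> y \<noteq> 0 \<Longrightarrow> x * y \<noteq> 0"
proof
  assume "x \<noteq> 0" "y \<noteq> 0" "x * y = 0"
  then have "inverse x * (x * y) = 0" by simp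
  then have "y = 0" using left_inverse_nz[OF \<open>x\<noteq>0\<close>] by (metis mult.assoc mult_1_left)
  with \<open>y\<noteq>0\<close> show False by simp
qed

lemma mult_eq0: "x * y = 0 \<longleftrightarrow> x = 0 \<or> y = 0"
  using no_zero_div by auto

lemma inverse_inverse_nz: "x \<noteq> 0 \<Longrightarrow> inverse (inverse x) = x"
  by (metis inverse_unique right_inverse_nz mult.commute)

lemma inverse_mult_nz: "x \<noteq> 0 \<Longrightarrow> y \<noteq> 0 \<Longrightarrow> inverse (x * y) = inverse x * inverse y"
proof -
  assume a: "x \<noteq> 0" "y \<noteq> 0"
  have "(x*y) * (inverse x * inverse y) = (x * inverse x) * (y * inverse y)" by (simp add: ac_simps)
  also have "\<dots> = 1" using a right_inverse_nz by simp
  finally show ?thesis by (rule inverse_unique[symmetric])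
qed

lemma mult_le_cancel_nz: "c \<noteq> 0 \<Longrightarrow> c * a \<le> c * b \<longleftrightarrow> a \<le> b"
proof
  assume c: "c \<noteq> 0" and h: "c * a \<le> c * b"
  have "inverse c * (c * a) \<le> inverse c * (c * b)" using h zero_le' by (simp add: mult_left_mono)
  then show "a \<le> b" using left_inverse_nz[OF c] by (simp add: mult.assoc[symmetric])
qed (simp add: mult_left_mono zero_le')

lemma mult_less_nz: "c \<noteq> 0 \<Longrightarrow> a < b \<Longrightarrow> a * c < b * c"
  using mult_le_cancel_nz[of c] by (simp add: mult.commute less_le_not_le)

lemma le_nz: "a \<le> b \<Longrightarrow> a \<noteq> 0 \<Longrightarrow> b \<noteq> 0"
  using zero_le' by (metis order.antisym)

lemma power_nz: "x \<noteq> 0 \<Longrightarrow> x ^ k \<noteq> 0"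
  by (induct k) (auto simp: no_zero_div)

lemma power_less: "y < x \<Longrightarrow> 0 < k \<Longrightarrow> y ^ k < x ^ k"
proof (induct k)
  case 0 then show ?case by simp
next
  case (Suc k)
  have x: "x \<noteq> 0" using Suc(2) zero_le' by (metis leD)
  show ?case
  proof (cases "y = 0")
    case True
    then show ?thesis using power_nz[OF x, of "Suc k"] zero_le'[of "x ^ Suc k"] by (simp add: order.order_iff_strict)
  next
    case False
    show ?thesis
    proof (cases k)
      case 0 then show ?thesis using Suc by simp
    next
      case (Suc k')
      then have "y^k < x^k" using \<open>y < x\<close> \<open>0 < Suc k\<close> Suc.hyps by simp
      have "y ^ Suc k = y^k * y" by (simp add: mult.commute)
      also have "\<dots> < x^k * y" using mult_less_nz[OF False \<open>y^k < x^k\<close>] .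
      also have "\<dots> < x^k * x" using mult_less_nz[OF power_nz[OF x] \<open>y<x\<close>] by (simp add: mult.commute)
      also have "\<dots> = x ^ Suc k" by (simp add: mult.commute)
      finally show ?thesis .
    qed
  qed
qed

lemma power_le_cancel: "x ^ k \<le> y ^ k \<Longrightarrow> 0 < k \<Longrightarrow> x \<le> y"
  using power_less[of y x k] by (meson leD le_less_linear)

lemma sroot_pow: "0 < k \<Longrightarrow> sroot k a ^ k = a"
proof -
  assume k: "0 < k"
  obtain x where x: "x ^ k = a" using alg_complete[OF k] by blast
  have "\<exists>!x. x ^ k = a"
    using x power_le_cancel[OF _ k] by (metis order.antisym order.refl)
  then show ?thesis unfolding sroot_def by (rule theI')
qed

lemma sroot_le: "0 < k \<Longrightarrow> a \<le> y ^ k \<Longrightarrow> sroot k a \<le> y"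
  using sroot_pow power_le_cancel by metis

lemma sum_le_iff: "finite S \<Longrightarrow> sum f S \<le> c \<longleftrightarrow> (\<forall>x\<in>S. f x \<le> c)"
  by (induct S rule: finite_induct) (auto simp: add_max zero_le')

lemma sum_ge: "finite S \<Longrightarrow> x \<in> S \<Longrightarrow> f x \<le> sum f S"
  by (simp add: sum.remove add_max)

lemma sum_attained: "finite S \<Longrightarrow> S \<noteq> {} \<Longrightarrow> \<exists>x\<in>S. sum f S = f x"
proof (induct S rule: finite_ne_induct)
  case (singleton x) then show ?case by simp
next
  case (insert x F)
  then obtain y where "y \<in> F" "sum f F = f y" by blast
  then show ?case using insert by (auto simp: add_max max_def)
qed

lemma prod_mono': "(\<And>i. i \<in> S \<Longrightarrow> f i \<le> g i) \<Longrightarrow> prod f S \<le> prod g S"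
proof (induct S rule: infinite_finite_induct)
  case (insert x F) then show ?case by (simp add: mult_mono zero_le')
qed simp_all

lemma prod_nz: "finite S \<Longrightarrow> (\<And>i. i \<in> S \<Longrightarrow> f i \<noteq> 0) \<Longrightarrow> prod f S \<noteq> 0"
  by (induct S rule: finite_induct) (auto simp: no_zero_div)

end

definition walkw :: "('n \<Rightarrow> 'n \<Rightarrow> 'a::lin_idem_semifield) \<Rightarrow> (nat \<Rightarrow> 'n) \<Rightarrow> nat \<Rightarrow> 'a" where
  "walkw M f k = (\<Prod>t<k. M (f t) (f (Suc t)))"

lemma walkw_Suc: "walkw M f (Suc k) = walkw M f k * M (f k) (f (Suc k))"
  by (simp add: walkw_def mult.commute)

lemma walk_lower:
  fixes M :: "'n::finite \<Rightarrow> 'n \<Rightarrow> 'a::lin_idem_semifield"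
  shows "walkw M f k \<le> mpow M k (f 0) (f k)"
proof (induct k)
  case 0 then show ?case by (simp add: walkw_def mident_def)
next
  case (Suc k)
  have "walkw M f (Suc k) \<le> mpow M k (f 0) (f k) * M (f k) (f (Suc k))"
    unfolding walkw_Suc using Suc by (simp add: mult_right_mono zero_le')
  also have "\<dots> \<le> mpow M (Suc k) (f 0) (f (Suc k))"
    unfolding mpow.simps mmult_def by (rule sum_ge[where x="f k"]) simp_all
  finally show ?case .
qed

lemma walk_exists:
  fixes M :: "'n::finite \<Rightarrow> 'n \<Rightarrow> 'a::lin_idem_semifield"
  shows "mpow M k i j = 0 \<or> (\<exists>f. f 0 = i \<and> f k = j \<and> mpow M k i j = walkw M f k)"
proof (induct k arbitrary: j)
  case 0 then show ?case
    by (cases "i = j") (auto simp: mident_def walkw_def intro!: exI[of _ "\<lambda>_. i"])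
next
  case (Suc k)
  obtain l where l: "mpow M (Suc k) i j = mpow M k i l * M l j"
    using sum_attained[of "UNIV :: 'n set" "\<lambda>l. mpow M k i l * M l j"] by (auto simp: mmult_def)
  show ?case
  proof (cases "mpow M k i l = 0")
    case True then show ?thesis using l by simp
  next
    case False
    then obtain f where f: "f 0 = i" "f k = l" "mpow M k i l = walkw M f k" using Suc by blast
    define g where "g = f(Suc k := j)"
    have "walkw M g k = walkw M f k" unfolding walkw_def g_def by (rule prod.cong) auto
    then have "walkw M g (Suc k) = mpow M (Suc k) i j"
      unfolding walkw_Suc l using f by (simp add: g_def)
    moreover have "g 0 = i" "g (Suc k) = j" using f by (auto simp: g_def)
    ultimately show ?thesis by metis
  qed
qed

lemma walk_split: "walkw M f (a + k) = walkw M f a * walkw M (\<lambda>t. f (t + a)) k"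
  by (induct k) (simp_all add: walkw_Suc walkw_def mult.assoc add.commute)

lemma mpow_le_mstar:
  fixes M :: "'n::finite \<Rightarrow> 'n \<Rightarrow> 'a::lin_idem_semifield"
  shows "k < (card (UNIV::'n set)) \<Longrightarrow> mpow M k i j \<le> mstar M i j"
  unfolding mstar_def by (rule sum_ge) auto

lemma mpow_card_le_mstar:
  fixes M :: "'n::finite \<Rightarrow> 'n \<Rightarrow> 'a::lin_idem_semifield"
  assumes cyc: "\<And>g L. g 0 = g L \<Longrightarrow> 0 < L \<Longrightarrow> L \<le> (card (UNIV::'n set)) \<Longrightarrow> walkw M g L \<le> 1"
  shows "mpow M (card (UNIV::'n set)) i j \<le> mstar M i j"
proof -
  let ?n = "(card (UNIV::'n set))"
  { fix f assume f: "f 0 = i" "f ?n = j" "mpow M ?n i j = walkw M f ?n"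
    have "\<not> inj_on f {..?n}"
    proof
      assume "inj_on f {..?n}"
      then have "card (f ` {..?n}) = Suc ?n" by (simp add: card_image)
      moreover have "card (f ` {..?n}) \<le> ?n" by (rule card_mono) auto
      ultimately show False by simp
    qed
    then obtain a b where ab: "a < b" "b \<le> ?n" "f a = f b"
      unfolding inj_on_def by (metis atMost_iff linorder_neqE_nat)
    define d where "d = b - a"
    have d: "0 < d" "d \<le> ?n" "b = a + d" using ab by (auto simp: d_def)
    define h where "h t = (if t \<le> a then f t else f (t + d))" for t
    have nsplit: "?n = a + (d + (?n - b))" using ab d by simp
    have "walkw M f ?n = walkw M f a * (walkw M (\<lambda>t. f (t + a)) d * walkw M (\<lambda>t. f (t + d + a)) (?n - b))"
      by (subst nsplit, simp only: walk_split)
    also have "walkw M (\<lambda>t. f (t + a)) d \<le> 1"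
      by (rule cyc) (use ab d in \<open>auto simp: add.commute\<close>)
    then have "walkw M f a * (walkw M (\<lambda>t. f (t + a)) d * walkw M (\<lambda>t. f (t + d + a)) (?n - b))
       \<le> walkw M f a * (1 * walkw M (\<lambda>t. f (t + d + a)) (?n - b))"
      by (intro mult_left_mono mult_right_mono zero_le')
    also have "walkw M f a = walkw M h a" unfolding walkw_def h_def by (rule prod.cong) auto
    also have "(\<lambda>t. f (t + d + a)) = (\<lambda>t. h (t + a))"
      using ab d by (auto simp: h_def fun_eq_iff add.commute add.left_commute)
    also have "walkw M h a * (1 * walkw M (\<lambda>t. h (t + a)) (?n - b)) = walkw M h (a + (?n - b))"
      by (simp add: walk_split)
    also have "\<dots> \<le> mpow M (a + (?n - b)) (h 0) (h (a + (?n - b)))" by (rule walk_lower)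
    also have "h 0 = i" using f by (simp add: h_def)
    also have "h (a + (?n - b)) = j"
      using f ab d by (cases "?n - b = 0") (auto simp: h_def)
    also have "mpow M (a + (?n - b)) i j \<le> mstar M i j"
      by (rule mpow_le_mstar) (use ab d in auto)
    finally have "mpow M ?n i j \<le> mstar M i j" using f by simp }
  then show ?thesis using walk_exists[of M ?n i j] zero_le' by metis
qed

lemma prepend_le:
  fixes M :: "'n::finite \<Rightarrow> 'n \<Rightarrow> 'a::lin_idem_semifield"
  shows "M r c * mpow M k c j \<le> mpow M (Suc k) r j"
proof -
  { fix f assume f: "f 0 = c" "f k = j" "mpow M k c j = walkw M f k"
    define g where "g t = (if t = 0 then r else f (t - 1))" for t
    have "walkw M g (Suc k) = M r c * walkw M f k"
      unfolding walkw_def prod.lessThan_Suc_shift using f by (simp add: g_def)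
    moreover have "walkw M g (Suc k) \<le> mpow M (Suc k) (g 0) (g (Suc k))" by (rule walk_lower)
    ultimately have ?thesis using f by (simp add: g_def) }
  then show ?thesis using walk_exists[of M k c j] zero_le' by (metis mult_zero_right)
qed


definition qf :: "('n::finite \<Rightarrow> 'n \<Rightarrow> 'a::lin_idem_semifield) \<Rightarrow> ('n \<Rightarrow> 'a) \<Rightarrow> 'a" where
  "qf M x = (\<Sum>r\<in>UNIV. \<Sum>c\<in>UNIV. inverse (x r) * M r c * x c)"

lemma finite_lists_len: "finite {is :: 'n::finite list. length is = k}"
  using finite_lists_length_eq[of "UNIV :: 'n set" k] by simp

lemma spec_term_le:
  fixes B :: "'n::finite \<Rightarrow> 'n \<Rightarrow> 'a::lin_idem_semifield"
  assumes "1 \<le> k" "k \<le> card (UNIV :: 'n set)" "length is = k"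
  shows "sroot k (\<Prod>j<k. B (is ! j) (is ! ((j + 1) mod k))) \<le> spec_rad B"
proof -
  have "sroot k (\<Prod>j<k. B (is ! j) (is ! ((j + 1) mod k)))
     \<le> (\<Sum>is\<in>{is :: 'n list. length is = k}. sroot k (\<Prod>j<k. B (is ! j) (is ! ((j + 1) mod k))))"
    by (rule sum_ge) (use assms finite_lists_len in auto)
  also have "\<dots> \<le> spec_rad B" unfolding spec_rad_def
    by (rule sum_ge[where f="\<lambda>k. \<Sum>is\<in>{is :: 'n list. length is = k}. sroot k (\<Prod>j<k. B (is ! j) (is ! ((j + 1) mod k)))"])
       (use assms in auto)
  finally show ?thesis .
qed

lemma card_ge1: "1 \<le> card (UNIV :: 'n::finite set)"
  using finite_UNIV_card_ge_0[where 'a='n] by simp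

lemma mu_nz:
  fixes B :: "'n::finite \<Rightarrow> 'n \<Rightarrow> 'a::lin_idem_semifield"
  assumes B_nz: "\<forall>r c. B r c \<noteq> 0"
  shows "spec_rad B \<noteq> 0"
proof -
  fix i :: 'n
  have "sroot 1 (\<Prod>j<1. B ([i] ! j) ([i] ! ((j + 1) mod 1))) \<le> spec_rad B"
    by (rule spec_term_le) (use card_ge1 in auto)
  moreover have "sroot 1 (B i i) = B i i" using sroot_pow[of 1 "B i i"] by simp
  ultimately have "B i i \<le> spec_rad B" by simp
  then show ?thesis using le_nz B_nz by blast
qed

lemma prod_rot: "0 < k \<Longrightarrow> (\<Prod>j<k. (\<phi>::nat \<Rightarrow> 'a::comm_monoid_mult) ((j + 1) mod k)) = (\<Prod>j<k. \<phi> j)"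
proof -
  assume "0 < k"
  then obtain k' where k: "k = Suc k'" by (cases k) auto
  have "(\<Prod>j<k. \<phi> ((j + 1) mod k)) = (\<Prod>j<k'. \<phi> ((j + 1) mod k)) * \<phi> ((k' + 1) mod k)"
    by (simp add: k mult.commute)
  also have "(\<Prod>j<k'. \<phi> ((j + 1) mod k)) = (\<Prod>j<k'. \<phi> (Suc j))"
    by (rule prod.cong) (auto simp: k)
  also have "\<phi> ((k' + 1) mod k) = \<phi> 0" by (simp add: k)
  also have "(\<Prod>j<k'. \<phi> (Suc j)) * \<phi> 0 = (\<Prod>j<k. \<phi> j)"
    unfolding k by (subst prod.lessThan_Suc_shift) (simp add: mult.commute)
  finally show ?thesis .
qed

lemma cycle_B:
  fixes B :: "'n::finite \<Rightarrow> 'n \<Rightarrow> 'a::lin_idem_semifield"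
  assumes "g 0 = g L" "0 < L" "L \<le> card (UNIV :: 'n set)"
  shows "walkw B g L \<le> spec_rad B ^ L"
proof -
  define "is" where "is = map g [0..<L]"
  have "(\<Prod>j<L. B (is ! j) (is ! ((j + 1) mod L))) = walkw B g L"
    unfolding walkw_def
  proof (rule prod.cong)
    fix j assume "j \<in> {..<L}"
    then have j: "j < L" by simp
    have "is ! ((j + 1) mod L) = g (Suc j)"
    proof (cases "Suc j < L")
      case True then show ?thesis by (simp add: is_def)
    next
      case False then have "Suc j = L" using j by simp
      then show ?thesis using assms by (simp add: is_def)
    qed
    then show "B (is ! j) (is ! ((j + 1) mod L)) = B (g j) (g (Suc j))" using j by (simp add: is_def)
  qed simp
  moreover have "sroot L (\<Prod>j<L. B (is ! j) (is ! ((j + 1) mod L))) \<le> spec_rad B"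
    by (rule spec_term_le) (use assms in \<open>auto simp: is_def\<close>)
  ultimately have "sroot L (walkw B g L) \<le> spec_rad B" by simp
  then have "sroot L (walkw B g L) ^ L \<le> spec_rad B ^ L" by (rule power_mono) (rule zero_le')
  then show ?thesis using sroot_pow assms by metis
qed

lemma cycle_C:
  fixes B :: "'n::finite \<Rightarrow> 'n \<Rightarrow> 'a::lin_idem_semifield"
  assumes B_nz: "\<forall>r c. B r c \<noteq> 0"
  assumes "g 0 = g L" "0 < L" "L \<le> card (UNIV :: 'n set)"
  shows "walkw (smult (inverse (spec_rad B)) B) g L \<le> 1"
proof -
  let ?m = "spec_rad B"
  have "walkw (smult (inverse ?m) B) g L = inverse ?m ^ L * walkw B g L"
    by (simp add: walkw_def smult_def prod.distrib)
  also have "\<dots> \<le> inverse ?m ^ L * ?m ^ L"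
    by (rule mult_left_mono[OF cycle_B[OF assms(2-4)] zero_le'])
  also have "\<dots> = (inverse ?m * ?m) ^ L" by (simp add: power_mult_distrib)
  also have "\<dots> = 1" using left_inverse_nz[OF mu_nz[OF B_nz]] by simp
  finally show ?thesis .
qed

lemma lower_bound:
  fixes B :: "'n::finite \<Rightarrow> 'n \<Rightarrow> 'a::lin_idem_semifield"
  assumes x: "regular x"
  shows "spec_rad B \<le> qf B x"
proof -
  let ?Q = "qf B x"
  have xnz: "\<And>i. x i \<noteq> 0" using x by (simp add: regular_def)
  have Ble: "B r c \<le> ?Q * (x r * inverse (x c))" for r c
  proof -
    have "inverse (x r) * B r c * x c \<le> (\<Sum>c\<in>UNIV. inverse (x r) * B r c * x c)"
      by (rule sum_ge) auto
    also have "\<dots> \<le> ?Q" unfolding qf_def by (rule sum_ge) auto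
    finally have "(x r * inverse (x c)) * (inverse (x r) * B r c * x c) \<le> (x r * inverse (x c)) * ?Q"
      by (rule mult_left_mono) (rule zero_le')
    moreover have "(x r * inverse (x c)) * (inverse (x r) * B r c * x c)
        = (x r * inverse (x r)) * (x c * inverse (x c)) * B r c" by (simp add: ac_simps)
    ultimately show ?thesis using right_inverse_nz[OF xnz[of r]] right_inverse_nz[OF xnz[of c]]
      by (simp add: mult.commute)
  qed
  show ?thesis unfolding spec_rad_def
  proof (subst sum_le_iff, simp, intro ballI, subst sum_le_iff, rule finite_lists_len, intro ballI)
    fix k "is" assume k: "k \<in> {1..card (UNIV :: 'n set)}" and "is": "is \<in> {is :: 'n list. length is = k}"
    have k0: "0 < k" using k by simp
    have "(\<Prod>j<k. B (is ! j) (is ! ((j + 1) mod k)))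
        \<le> (\<Prod>j<k. ?Q * (x (is ! j) * inverse (x (is ! ((j + 1) mod k)))))"
      by (rule prod_mono') (rule Ble)
    also have "\<dots> = ?Q ^ k * ((\<Prod>j<k. x (is ! j)) * (\<Prod>j<k. inverse (x (is ! ((j + 1) mod k)))))"
      by (simp add: prod.distrib)
    also have "(\<Prod>j<k. inverse (x (is ! ((j + 1) mod k)))) = (\<Prod>j<k. inverse (x (is ! j)))"
      by (rule prod_rot[OF k0, of "\<lambda>j. inverse (x (is ! j))"])
    also have "(\<Prod>j<k. x (is ! j)) * (\<Prod>j<k. inverse (x (is ! j))) = 1"
      by (simp add: prod.distrib[symmetric] right_inverse_nz xnz)
    finally show "sroot k (\<Prod>j<k. B (is ! j) (is ! ((j + 1) mod k))) \<le> ?Q"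
      by (intro sroot_le k0) simp
  qed
qed


lemma qf_le_iff:
  fixes B :: "'n::finite \<Rightarrow> 'n \<Rightarrow> 'a::lin_idem_semifield"
  assumes x: "regular x" and mnz: "m \<noteq> 0"
  shows "qf B x \<le> m \<longleftrightarrow> (\<forall>r c. smult (inverse m) B r c * x c \<le> x r)"
proof -
  have xnz: "\<And>i. x i \<noteq> 0" using x by (simp add: regular_def)
  have e: "inverse (x r) * B r c * x c \<le> m \<longleftrightarrow> smult (inverse m) B r c * x c \<le> x r" for r c
  proof -
    have nz: "x r * inverse m \<noteq> 0" using xnz mnz inverse_nz no_zero_div by blast
    have "inverse (x r) * B r c * x c \<le> m \<longleftrightarrow>
       (x r * inverse m) * (inverse (x r) * B r c * x c) \<le> (x r * inverse m) * m"
      using mult_le_cancel_nz[OF nz] by simp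
    also have "(x r * inverse m) * (inverse (x r) * B r c * x c) = (x r * inverse (x r)) * (inverse m * B r c * x c)"
      by (simp add: ac_simps)
    also have "(x r * inverse m) * m = x r * (inverse m * m)" by (simp add: ac_simps)
    finally show ?thesis using right_inverse_nz[OF xnz[of r]] left_inverse_nz[OF mnz]
      by (simp add: smult_def)
  qed
  show ?thesis unfolding qf_def by (simp add: sum_le_iff e)
qed

lemma if_one_mult: "(if P then 1 else 0) * (y::'a::lin_idem_semifield) = (if P then y else 0)"
  by simp

lemma mpow_one: "mpow M (Suc 0) i j = M i j"
  by (simp add: mmult_def mident_def if_one_mult)

lemma mstar_fix:
  fixes C :: "'n::finite \<Rightarrow> 'n \<Rightarrow> 'a::lin_idem_semifield"
  assumes H: "\<forall>r c. C r c * x c \<le> x r"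
  shows "mvmult (mstar C) x = x"
proof -
  have P: "(\<Sum>j\<in>UNIV. mpow C k i j * x j) \<le> x i" for k i
  proof (induct k arbitrary: i)
    case 0 then show ?case by (simp add: mident_def if_one_mult)
  next
    case (Suc k)
    show ?case
    proof (subst sum_le_iff, simp, intro ballI)
      fix j
      have "mpow C (Suc k) i j * x j = (\<Sum>l\<in>UNIV. mpow C k i l * (C l j * x j))"
        by (simp add: mmult_def sum_distrib_right mult.assoc)
      also have "\<dots> \<le> (\<Sum>l\<in>UNIV. mpow C k i l * x l)"
        by (rule sum_mono, rule mult_left_mono) (use H zero_le' in auto)
      also have "\<dots> \<le> x i" by (rule Suc)
      finally show "mpow C (Suc k) i j * x j \<le> x i" .
    qed
  qed
  show ?thesis
  proof
    fix i
    show "mvmult (mstar C) x i = x i"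
    proof (rule order.antisym)
      show "mvmult (mstar C) x i \<le> x i"
        unfolding mvmult_def mstar_def
      proof (subst sum_le_iff, simp, intro ballI)
        fix j
        show "(\<Sum>k<card (UNIV::'n set). mpow C k i j) * x j \<le> x i"
          unfolding sum_distrib_right
        proof (subst sum_le_iff, simp, intro ballI)
          fix k
          have "mpow C k i j * x j \<le> (\<Sum>j\<in>UNIV. mpow C k i j * x j)" by (rule sum_ge) auto
          then show "mpow C k i j * x j \<le> x i" using P order_trans by blast
        qed
      qed
      have "x i = mpow C 0 i i * x i" by (simp add: mident_def)
      also have "\<dots> \<le> mstar C i i * x i"
        by (rule mult_right_mono[OF mpow_le_mstar zero_le']) (use card_ge1[where 'n='n] in \<open>auto simp: Suc_le_eq\<close>)
      also have "\<dots> \<le> mvmult (mstar C) x i" unfolding mvmult_def by (rule sum_ge) auto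
      finally show "x i \<le> mvmult (mstar C) x i" .
    qed
  qed
qed

lemma card_ge2: "(i::'n::finite) \<noteq> j \<Longrightarrow> 2 \<le> card (UNIV :: 'n set)"
proof -
  assume "i \<noteq> j"
  then have "card {i, j} = 2" by simp
  moreover have "card {i, j} \<le> card (UNIV :: 'n set)" by (rule card_mono) auto
  ultimately show ?thesis by simp
qed

lemma P1:
  fixes B :: "'n::finite \<Rightarrow> 'n \<Rightarrow> 'a::lin_idem_semifield"
  assumes B_nz: "\<forall>r c. B r c \<noteq> 0" and u: "u \<noteq> (\<lambda>_. 0)"
  defines "C \<equiv> smult (inverse (spec_rad B)) B"
  shows "regular (mvmult (mstar C) u) \<and> (\<forall>r c. C r c * mvmult (mstar C) u c \<le> mvmult (mstar C) u r)"
proof -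
  let ?n = "card (UNIV :: 'n set)"
  have Cnz: "C r c \<noteq> 0" for r c
    unfolding C_def smult_def using B_nz inverse_nz[OF mu_nz[OF B_nz]] no_zero_div by blast
  obtain j0 where j0: "u j0 \<noteq> 0" using u by auto
  have reg: "regular (mvmult (mstar C) u)" unfolding regular_def
  proof
    fix i
    have "mstar C i j0 \<noteq> 0"
    proof (cases "i = j0")
      case True
      have "mpow C 0 i j0 \<le> mstar C i j0" by (rule mpow_le_mstar) (use card_ge1[where 'n='n] in auto)
      then show ?thesis using True le_nz[of 1] by (simp add: mident_def)
    next
      case False
      have "mpow C (Suc 0) i j0 \<le> mstar C i j0" by (rule mpow_le_mstar) (use card_ge2[OF False] in auto)
      then show ?thesis using le_nz Cnz[of i j0] unfolding mpow_one by blast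
    qed
    then have "mstar C i j0 * u j0 \<noteq> 0" using j0 no_zero_div by blast
    moreover have "mstar C i j0 * u j0 \<le> mvmult (mstar C) u i" unfolding mvmult_def by (rule sum_ge) auto
    ultimately show "mvmult (mstar C) u i \<noteq> 0" using le_nz by blast
  qed
  have cyc: "\<And>g L. g 0 = g L \<Longrightarrow> 0 < L \<Longrightarrow> L \<le> ?n \<Longrightarrow> walkw C g L \<le> 1"
    unfolding C_def by (rule cycle_C[OF B_nz])
  have star: "C r c * mstar C c j \<le> mstar C r j" for r c j
    unfolding mstar_def sum_distrib_left
  proof (subst sum_le_iff, simp, intro ballI)
    fix k assume k: "k \<in> {..<?n}"
    have "C r c * mpow C k c j \<le> mpow C (Suc k) r j" by (rule prepend_le)
    also have "\<dots> \<le> mstar C r j"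
    proof (cases "Suc k < ?n")
      case True then show ?thesis by (rule mpow_le_mstar)
    next
      case False then have "Suc k = ?n" using k by simp
      then show ?thesis using mpow_card_le_mstar[OF cyc] by metis
    qed
    finally show "C r c * mpow C k c j \<le> (\<Sum>k<?n. mpow C k r j)" unfolding mstar_def .
  qed
  have "C r c * mvmult (mstar C) u c \<le> mvmult (mstar C) u r" for r c
  proof -
    have "C r c * mvmult (mstar C) u c = (\<Sum>j\<in>UNIV. (C r c * mstar C c j) * u j)"
      by (simp add: mvmult_def sum_distrib_left mult.assoc)
    also have "\<dots> \<le> (\<Sum>j\<in>UNIV. mstar C r j * u j)"
      by (rule sum_mono, rule mult_right_mono[OF star zero_le'])
    finally show ?thesis by (simp add: mvmult_def)
  qed
  with reg show ?thesis by blast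
qed


lemma mdist_recip:
  fixes A :: "'n::finite \<Rightarrow> 'n \<Rightarrow> 'a::lin_idem_semifield"
  assumes rA: "mpinv A = A" and x: "regular x"
  shows "mdist A (outer_pinv x) = qf A x"
proof -
  have xnz: "\<And>i. x i \<noteq> 0" using x by (simp add: regular_def)
  let ?P = "outer_pinv x"
  have P: "?P r c = x r * inverse (x c)" for r c by (simp add: outer_pinv_def vpinv_def xnz)
  have Pnz: "?P r c \<noteq> 0" for r c unfolding P using xnz inverse_nz no_zero_div by blast
  have PP: "mpinv ?P = ?P"
  proof (rule ext, rule ext)
    fix i k
    show "mpinv ?P i k = ?P i k"
      unfolding mpinv_def using Pnz[of k i]
      by (simp add: P inverse_mult_nz xnz inverse_nz inverse_inverse_nz mult.commute)
  qed
  have t1: "mtrace (mmult (mpinv ?P) A) = qf A x"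
    unfolding PP mtrace_def mmult_def qf_def P
    by (subst sum.swap) (simp add: ac_simps)
  have t2: "mtrace (mmult (mpinv A) ?P) = qf A x"
    unfolding rA mtrace_def mmult_def qf_def P by (simp add: ac_simps)
  show ?thesis unfolding mdist_def t1 t2 by (rule add_idem)
qed

lemma objective:
  fixes A :: "nat \<Rightarrow> ('n::finite \<Rightarrow> 'n \<Rightarrow> 'a::lin_idem_semifield)"
  assumes recip: "\<forall>i\<in>I. mpinv (A i) = A i" and x: "regular x" and fI: "finite I"
  shows "(\<Sum>i\<in>I. w i * mdist (A i) (outer_pinv x)) = qf (\<lambda>r c. \<Sum>i\<in>I. w i * A i r c) x"
proof -
  have "(\<Sum>i\<in>I. w i * mdist (A i) (outer_pinv x)) = (\<Sum>i\<in>I. w i * qf (A i) x)"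
    using recip mdist_recip[OF _ x] by simp
  also have "\<dots> = (\<Sum>i\<in>I. \<Sum>r\<in>UNIV. \<Sum>c\<in>UNIV. inverse (x r) * (w i * A i r c) * x c)"
    by (simp add: qf_def sum_distrib_left ac_simps)
  also have "\<dots> = (\<Sum>r\<in>UNIV. \<Sum>i\<in>I. \<Sum>c\<in>UNIV. inverse (x r) * (w i * A i r c) * x c)"
    by (rule sum.swap)
  also have "\<dots> = (\<Sum>r\<in>UNIV. \<Sum>c\<in>UNIV. \<Sum>i\<in>I. inverse (x r) * (w i * A i r c) * x c)"
    by (rule sum.cong[OF refl], rule sum.swap)
  also have "\<dots> = qf (\<lambda>r c. \<Sum>i\<in>I. w i * A i r c) x"
    by (simp add: qf_def sum_distrib_left sum_distrib_right)
  finally show ?thesis .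
qed

theorem corollary3:
  fixes A :: "nat \<Rightarrow> ('n::finite \<Rightarrow> 'n \<Rightarrow> 'a::lin_idem_semifield)"
    and w :: "nat \<Rightarrow> 'a" and m :: nat
    and B :: "'n \<Rightarrow> 'n \<Rightarrow> 'a" and \<mu> :: 'a
  assumes recip: "\<forall>i\<in>{1..m}. mpinv (A i) = A i"
    and B_def: "B = (\<lambda>r c. \<Sum>i\<in>{1..m}. w i * A i r c)"
    and B_nz: "\<forall>r c. B r c \<noteq> 0"
    and mu_def: "\<mu> = spec_rad B"
  shows "(\<exists>x. regular x \<and> (\<Sum>i\<in>{1..m}. w i * mdist (A i) (outer_pinv x)) = \<mu>)
    \<and> (\<forall>x. regular x \<longrightarrow> \<mu> \<le> (\<Sum>i\<in>{1..m}. w i * mdist (A i) (outer_pinv x)))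
    \<and> {x. regular x \<and> (\<forall>y. regular y \<longrightarrow>
          (\<Sum>i\<in>{1..m}. w i * mdist (A i) (outer_pinv x))
            \<le> (\<Sum>i\<in>{1..m}. w i * mdist (A i) (outer_pinv y)))}
      = {mvmult (mstar (smult (inverse \<mu>) B)) u | u. u \<noteq> (\<lambda>_. 0)}"
proof -
  let ?F = "\<lambda>x. \<Sum>i\<in>{1..m}. w i * mdist (A i) (outer_pinv x)"
  let ?C = "smult (inverse \<mu>) B"
  have F: "regular x \<Longrightarrow> ?F x = qf B x" for x
    unfolding B_def by (rule objective[OF recip]) auto
  have mnz: "\<mu> \<noteq> 0" unfolding mu_def by (rule mu_nz[OF B_nz])
  have low: "regular x \<Longrightarrow> \<mu> \<le> ?F x" for x
    using F lower_bound mu_def by metis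
  have good: "regular (mvmult (mstar ?C) u) \<and> ?F (mvmult (mstar ?C) u) = \<mu>" if u: "u \<noteq> (\<lambda>_. 0)" for u
  proof -
    have p: "regular (mvmult (mstar ?C) u) \<and> (\<forall>r c. ?C r c * mvmult (mstar ?C) u c \<le> mvmult (mstar ?C) u r)"
      using P1[OF B_nz u] mu_def by simp
    then have "qf B (mvmult (mstar ?C) u) \<le> \<mu>" using qf_le_iff[OF _ mnz] by blast
    then show ?thesis using p low F order.antisym by metis
  qed
  obtain x0 where x0: "regular x0" "?F x0 = \<mu>" using good[of "\<lambda>_. 1"] by (metis zero_neq_one)
  have set: "{x. regular x \<and> (\<forall>y. regular y \<longrightarrow> ?F x \<le> ?F y)}
      = {mvmult (mstar ?C) u | u. u \<noteq> (\<lambda>_. 0)}"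
  proof (intro equalityI subsetI)
    fix x assume "x \<in> {x. regular x \<and> (\<forall>y. regular y \<longrightarrow> ?F x \<le> ?F y)}"
    then have x: "regular x" "?F x \<le> \<mu>" using x0 by auto
    then have "qf B x \<le> \<mu>" using F by simp
    then have "\<forall>r c. ?C r c * x c \<le> x r" using qf_le_iff[OF x(1) mnz] by blast
    then have "mvmult (mstar ?C) x = x" by (rule mstar_fix)
    moreover have "x \<noteq> (\<lambda>_. 0)" using x(1) by (auto simp: regular_def)
    ultimately show "x \<in> {mvmult (mstar ?C) u | u. u \<noteq> (\<lambda>_. 0)}" by force
  next
    fix x assume "x \<in> {mvmult (mstar ?C) u | u. u \<noteq> (\<lambda>_. 0)}"
    then obtain u where "u \<noteq> (\<lambda>_. 0)" "x = mvmult (mstar ?C) u" by blast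
    then have "regular x" "?F x = \<mu>" using good by auto
    then show "x \<in> {x. regular x \<and> (\<forall>y. regular y \<longrightarrow> ?F x \<le> ?F y)}" using low by auto
  qed
  show ?thesis using x0 low set by blast
qed

end
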